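(* Let $H:B^{\mathbb{N}}\to B^{\mathbb{N}}$ be a one-sided CA with local rule $H(c)_i=H_l(c_i,c_{i+1})$ (neighborhood $\{0,1\}$) and a spreading state $q\in B$. Let $k\in\mathbb{N}$ with $k>\log_2|B|$, let $A=\{0,1,2\}^{2k}$ and let $F_{2k}:A^{\mathbb{N}}\to A^{\mathbb{N}}$ be the $2k$-fold Cartesian product of the CA $F$ on $\{0,1,2\}^{\mathbb{N}}$ defined by $F(c)_i=\rho_{c_{i+1}}(c_i)$, where $\rho_0=\rho_2$ is the permutation $0\mapsto0,1\mapsto2,2\mapsto1$ and $\rho_1$ is $0\mapsto1,1\mapsto2,2\mapsto0$. Define CA $\mathcal{F},\mathcal{G}$ on $(A\times B)^{\mathbb{N}}$ with neighborhood $\{0,1\}$ by $\mathcal{G}((a_0,b_0)(a_1,b_1))=(a_0,H_l(b_0,b_1))$ and $\mathcal{F}((a_0,b_0)(a_1,b_1))=(F_{2k}(a_0a_1),H_l(b_0,b_1))$ if $H_l(b_0,b_1)\neq q$, and $=(a_0,H_l(b_0,b_1))$ if $H_l(b_0,b_1)=q$ (here $F_{2k}(a_0a_1)$ denotes the local rule of $F_{2k}$ applied to $a_0,a_1$). Then: (1) if $H$ is not nilpotent, $h(\mathcal{F})>h(\mathcal{G})$; (2) if $H$ is nilpotent, $\mathcal{F}$ and $\mathcal{G}$ are strongly conjugate and $h(\mathcal{F})=h(\mathcal{G})=0$.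
   Context: A CA is a continuous shift-commuting self-map of a full shift $A^{\mathbb{N}}$ ($A$ finite), given by a local rule. A state $s$ is spreading if the local rule maps every neighborhood pattern containing $s$ to $s$. A CA $H$ is nilpotent if there is a state $q$ with $H({}^\omega q^\omega)={}^\omega q^\omega$ (the constant configuration) such that every configuration $c$ satisfies $H^n(c)={}^\omega q^\omega$ for some $n$. The $2k$-fold Cartesian product of $F$ acts coordinatewise on $(\{0,1,2\}^{2k})^{\mathbb{N}}$. $h$ denotes topological entropy ($\log_2$). Strong conjugacy: a homeomorphism $\phi$ with $\phi\mathcal{F}=\mathcal{G}\phi$ and $\phi\sigma=\sigma\phi$. *)

theory Defs
  imports "HOL-Analysis.Analysis"
begin

definition configs :: "'a set \<Rightarrow> (nat \<Rightarrow> 'a) set" where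
  "configs S = {c. \<forall>i. c i \<in> S}"

definition shift_space :: "'a set \<Rightarrow> (nat \<Rightarrow> 'a) topology" where
  "shift_space S = product_topology (\<lambda>_. discrete_topology S) UNIV"

definition shift :: "(nat \<Rightarrow> 'a) \<Rightarrow> (nat \<Rightarrow> 'a)" where
  "shift c = (\<lambda>i. c (Suc i))"

definition ca2 :: "('a \<Rightarrow> 'a \<Rightarrow> 'a) \<Rightarrow> (nat \<Rightarrow> 'a) \<Rightarrow> (nat \<Rightarrow> 'a)" where
  "ca2 f c = (\<lambda>i. f (c i) (c (Suc i)))"

definition spreading :: "('a \<Rightarrow> 'a \<Rightarrow> 'a) \<Rightarrow> 'a \<Rightarrow> bool" where
  "spreading f s \<longleftrightarrow> (\<forall>x. f s x = s \<and> f x s = s)"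

definition nilpotent_on :: "'a set \<Rightarrow> ((nat \<Rightarrow> 'a) \<Rightarrow> (nat \<Rightarrow> 'a)) \<Rightarrow> bool" where
  "nilpotent_on S H \<longleftrightarrow> (\<exists>q\<in>S. H (\<lambda>_. q) = (\<lambda>_. q) \<and>
       (\<forall>c\<in>configs S. \<exists>n. (H ^^ n) c = (\<lambda>_. q)))"

definition st_patterns :: "'a set \<Rightarrow> ((nat \<Rightarrow> 'a) \<Rightarrow> (nat \<Rightarrow> 'a)) \<Rightarrow> nat \<Rightarrow> nat \<Rightarrow> (nat \<Rightarrow> nat \<Rightarrow> 'a) set" where
  "st_patterns S F w t =
     (\<lambda>c. \<lambda>i j. if i < t \<and> j < w then (F ^^ i) c j else undefined) ` configs S"

definition ca_entropy :: "'a set \<Rightarrow> ((nat \<Rightarrow> 'a) \<Rightarrow> (nat \<Rightarrow> 'a)) \<Rightarrow> ereal" where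
  "ca_entropy S F = (SUP w. limsup (\<lambda>t. ereal (log 2 (real (card (st_patterns S F w t))) / real t)))"

definition strongly_conjugate :: "'a set \<Rightarrow> ((nat \<Rightarrow> 'a) \<Rightarrow> (nat \<Rightarrow> 'a)) \<Rightarrow> ((nat \<Rightarrow> 'a) \<Rightarrow> (nat \<Rightarrow> 'a)) \<Rightarrow> bool" where
  "strongly_conjugate S F G \<longleftrightarrow> (\<exists>\<phi>. homeomorphic_map (shift_space S) (shift_space S) \<phi> \<and>
      (\<forall>c\<in>configs S. \<phi> (F c) = G (\<phi> c)) \<and> (\<forall>c\<in>configs S. \<phi> (shift c) = shift (\<phi> c)))"

definition rho :: "nat \<Rightarrow> nat \<Rightarrow> nat" where
  "rho s x = (if s = 1 then (if x = 0 then 1 else if x = 1 then 2 else 0)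
              else (if x = 0 then 0 else if x = 1 then 2 else 1))"

definition alphA :: "nat \<Rightarrow> nat list set" where
  "alphA k = {xs. length xs = 2 * k \<and> set xs \<subseteq> {0, 1, 2}}"

definition F2k_local :: "nat list \<Rightarrow> nat list \<Rightarrow> nat list" where
  "F2k_local a0 a1 = map2 (\<lambda>x y. rho y x) a0 a1"

definition calG_local :: "('b \<Rightarrow> 'b \<Rightarrow> 'b) \<Rightarrow> nat list \<times> 'b \<Rightarrow> nat list \<times> 'b \<Rightarrow> nat list \<times> 'b" where
  "calG_local Hl x y = (fst x, Hl (snd x) (snd y))"

definition calF_local :: "('b \<Rightarrow> 'b \<Rightarrow> 'b) \<Rightarrow> 'b \<Rightarrow> nat list \<times> 'b \<Rightarrow> nat list \<times> 'b \<Rightarrow> nat list \<times> 'b" where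
  "calF_local Hl q x y = (if Hl (snd x) (snd y) \<noteq> q
      then (F2k_local (fst x) (fst y), Hl (snd x) (snd y))
      else (fst x, Hl (snd x) (snd y)))"

end

theory Submission
  imports Defs
begin


lemma ca2_Suc: "(ca2 f ^^ Suc n) c j = f ((ca2 f ^^ n) c j) ((ca2 f ^^ n) c (Suc j))"
  by (simp add: ca2_def)

lemma ca2_local:
  assumes "\<And>i. j \<le> i \<Longrightarrow> i \<le> j + n \<Longrightarrow> c i = c' i"
  shows "(ca2 f ^^ n) c j = (ca2 f ^^ n) c' j"
  using assms
proof (induction n arbitrary: j)
  case 0 then show ?case by simp
next
  case (Suc n)
  have "(ca2 f ^^ n) c j = (ca2 f ^^ n) c' j" by (rule Suc.IH) (use Suc.prems in auto)
  moreover have "(ca2 f ^^ n) c (Suc j) = (ca2 f ^^ n) c' (Suc j)" by (rule Suc.IH) (use Suc.prems in auto)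
  ultimately show ?case unfolding ca2_Suc by simp
qed

lemma ca2_shift: "ca2 f (shift c) = shift (ca2 f c)"
  by (simp add: ca2_def shift_def)

lemma ca2_iter_shift: "(ca2 f ^^ n) (shift c) = shift ((ca2 f ^^ n) c)"
  by (induction n) (auto simp: ca2_shift)

lemma ca2_closed:
  assumes "\<And>x y. x \<in> S \<Longrightarrow> y \<in> S \<Longrightarrow> f x y \<in> S" "c \<in> configs S"
  shows "(ca2 f ^^ n) c \<in> configs S"
  using assms(2) by (induction n) (auto simp: configs_def ca2_def assms(1))

lemma topspace_shift_space: "topspace (shift_space S) = configs S"
  by (auto simp: shift_space_def topspace_product_topology configs_def PiE_def extensional_def)

lemma openin_cyl:
  assumes "x \<in> configs S"
  shows "openin (shift_space S) {c \<in> configs S. \<forall>i<M. c i = x i}"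
proof -
  have eq: "{c \<in> configs S. \<forall>i<M. c i = x i} = PiE UNIV (\<lambda>i. if i < M then {x i} else S)"
    using assms by (auto simp: configs_def PiE_def extensional_def split: if_splits)
  have "finite {i \<in> UNIV. (if i < M then {x i} else S) \<noteq> topspace (discrete_topology S)}"
    by (rule finite_subset[of _ "{..<M}"]) auto
  then show ?thesis unfolding eq shift_space_def
    using assms by (subst openin_PiE_gen) (auto simp: configs_def)
qed

lemma local_cont:
  assumes cl: "\<And>c. c \<in> configs S \<Longrightarrow> \<phi> c \<in> configs S'"
    and loc: "\<And>j. \<exists>M. \<forall>c\<in>configs S. \<forall>c'\<in>configs S. (\<forall>i<M. c i = c' i) \<longrightarrow> \<phi> c j = \<phi> c' j"
  shows "continuous_map (shift_space S) (shift_space S') \<phi>"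
  unfolding shift_space_def continuous_map_componentwise_UNIV
proof
  fix j
  obtain M where M: "\<forall>c\<in>configs S. \<forall>c'\<in>configs S. (\<forall>i<M. c i = c' i) \<longrightarrow> \<phi> c j = \<phi> c' j"
    using loc by blast
  have ts: "topspace (product_topology (\<lambda>_. discrete_topology S) UNIV) = configs S"
    using topspace_shift_space[of S] by (simp add: shift_space_def)
  show "continuous_map (product_topology (\<lambda>_. discrete_topology S) UNIV) (discrete_topology S') (\<lambda>x. \<phi> x j)"
    unfolding continuous_map_def
  proof (intro conjI allI impI)
    show "(\<lambda>x. \<phi> x j) \<in> topspace (product_topology (\<lambda>_. discrete_topology S) UNIV) \<rightarrow> topspace (discrete_topology S')"
      using cl unfolding ts configs_def Pi_def by simp
    fix U assume "openin (discrete_topology S') U"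
    show "openin (product_topology (\<lambda>_. discrete_topology S) UNIV)
       {x \<in> topspace (product_topology (\<lambda>_. discrete_topology S) UNIV). \<phi> x j \<in> U}"
      unfolding ts
    proof (subst openin_subopen, intro ballI)
      fix x assume x: "x \<in> {x \<in> configs S. \<phi> x j \<in> U}"
      show "\<exists>T. openin (product_topology (\<lambda>_. discrete_topology S) UNIV) T \<and> x \<in> T \<and> T \<subseteq> {x \<in> configs S. \<phi> x j \<in> U}"
      proof (intro exI conjI)
        show "openin (product_topology (\<lambda>_. discrete_topology S) UNIV) {c \<in> configs S. \<forall>i<M. c i = x i}"
          using openin_cyl[of x S M] x by (simp add: shift_space_def)
        show "x \<in> {c \<in> configs S. \<forall>i<M. c i = x i}" using x by simp
        show "{c \<in> configs S. \<forall>i<M. c i = x i} \<subseteq> {x \<in> configs S. \<phi> x j \<in> U}"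
        proof
          fix c assume c: "c \<in> {c \<in> configs S. \<forall>i<M. c i = x i}"
          then have "\<phi> c j = \<phi> x j" using M x by blast
          then show "c \<in> {x \<in> configs S. \<phi> x j \<in> U}" using c x by simp
        qed
      qed
    qed
  qed
qed

lemma compact_shift: "finite S \<Longrightarrow> compact_space (shift_space S)"
  unfolding shift_space_def by (simp add: compact_space_product_topology compact_space_discrete_topology)

lemma hausdorff_shift: "Hausdorff_space (shift_space S)"
  unfolding shift_space_def by (simp add: Hausdorff_space_product_topology Hausdorff_space_discrete_topology)

text \<open>Compactness: nested nonempty sets defined by local predicates have a common point.\<close>
lemma nest_local:
  fixes P :: "nat \<Rightarrow> (nat \<Rightarrow> 'a) \<Rightarrow> bool"
  assumes fin: "finite S"
    and loc: "\<And>n. \<exists>M. \<forall>c\<in>configs S. \<forall>c'\<in>configs S. (\<forall>i<M. c i = c' i) \<longrightarrow> P n c = P n c'"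
    and ne: "\<And>n. \<exists>c\<in>configs S. P n c"
    and mono: "\<And>n c. c \<in> configs S \<Longrightarrow> P (Suc n) c \<Longrightarrow> P n c"
  shows "\<exists>c\<in>configs S. \<forall>n. P n c"
proof -
  define C where "C n = {c \<in> configs S. P n c}" for n
  have cl: "closedin (shift_space S) (C n)" for n
  proof -
    have "continuous_map (shift_space S) (shift_space UNIV) (\<lambda>c (_::nat). P n c)"
      by (rule local_cont) (use loc[of n] in \<open>auto simp: configs_def\<close>)
    then have cm: "continuous_map (shift_space S) (discrete_topology UNIV) (\<lambda>c. P n c)"
      unfolding shift_space_def continuous_map_componentwise_UNIV by blast
    have "closedin (shift_space S) {c \<in> topspace (shift_space S). P n c \<in> {True}}"
      by (rule closedin_continuous_map_preimage[OF cm]) simp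
    then show ?thesis by (simp add: C_def topspace_shift_space)
  qed
  have "\<Inter> (range C) \<noteq> {}"
  proof (rule compact_space_imp_nest[OF compact_shift[OF fin] cl])
    show "C n \<noteq> {}" for n using ne[of n] by (auto simp: C_def)
    have "decseq C" by (rule decseq_SucI) (use mono in \<open>auto simp: C_def\<close>)
    then show "antimono_on UNIV C" by simp
  qed
  then show ?thesis by (auto simp: C_def)
qed




definition pat :: "((nat \<Rightarrow> 'a) \<Rightarrow> (nat \<Rightarrow> 'a)) \<Rightarrow> nat \<Rightarrow> nat \<Rightarrow> (nat \<Rightarrow> 'a) \<Rightarrow> (nat \<Rightarrow> nat \<Rightarrow> 'a)" where
  "pat \<Phi> w t c = (\<lambda>i j. if i < t \<and> j < w then (\<Phi> ^^ i) c j else undefined)"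

lemma st_patterns_pat: "st_patterns S \<Phi> w t = pat \<Phi> w t ` configs S"
  by (simp add: st_patterns_def pat_def)

lemma st_card_le_gen:
  assumes gE: "g ` configs S \<subseteq> E" and fE: "finite E"
    and dep: "\<And>c c'. c \<in> configs S \<Longrightarrow> c' \<in> configs S \<Longrightarrow> g c = g c' \<Longrightarrow>
               (\<forall>i<t. \<forall>j<w. (\<Phi>^^i) c j = (\<Phi>^^i) c' j)"
  shows "finite (st_patterns S \<Phi> w t) \<and> card (st_patterns S \<Phi> w t) \<le> card E"
proof -
  let ?X = "configs S"
  define h where "h y = pat \<Phi> w t (SOME c. c \<in> ?X \<and> g c = y)" for y
  have eq: "pat \<Phi> w t ` ?X = h ` (g ` ?X)"
  proof (rule set_eqI, rule iffI)
    fix p assume "p \<in> pat \<Phi> w t ` ?X"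
    then obtain c where c: "c \<in> ?X" "p = pat \<Phi> w t c" by blast
    define c' where "c' = (SOME c'. c' \<in> ?X \<and> g c' = g c)"
    have c': "c' \<in> ?X \<and> g c' = g c" unfolding c'_def by (rule someI[of _ c]) (use c in auto)
    have "pat \<Phi> w t c' = pat \<Phi> w t c"
      using dep[of c' c] c' c(1) by (auto simp: pat_def fun_eq_iff)
    then have "p = h (g c)" using c by (simp add: h_def c'_def)
    then show "p \<in> h ` (g ` ?X)" using c by blast
  next
    fix p assume "p \<in> h ` (g ` ?X)"
    then obtain c where c: "c \<in> ?X" "p = h (g c)" by blast
    define c' where "c' = (SOME c'. c' \<in> ?X \<and> g c' = g c)"
    have c': "c' \<in> ?X \<and> g c' = g c" unfolding c'_def by (rule someI[of _ c]) (use c in auto)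
    then show "p \<in> pat \<Phi> w t ` ?X" using c by (auto simp: h_def c'_def)
  qed
  have fin: "finite (g ` ?X)" using gE fE finite_subset by blast
  have "card (h ` (g ` ?X)) \<le> card (g ` ?X)" by (rule card_image_le[OF fin])
  also have "\<dots> \<le> card E" by (rule card_mono[OF fE gE])
  finally show ?thesis using fin by (simp add: st_patterns_pat eq)
qed

lemma st_card_ge:
  assumes "finite (st_patterns S \<Phi> w t)" "Y \<subseteq> configs S" "inj_on (pat \<Phi> w t) Y"
  shows "card Y \<le> card (st_patterns S \<Phi> w t)"
proof -
  have "card Y = card (pat \<Phi> w t ` Y)" using assms(3) by (simp add: card_image)
  also have "\<dots> \<le> card (st_patterns S \<Phi> w t)"
    by (rule card_mono[OF assms(1)]) (use assms(2) in \<open>auto simp: st_patterns_pat\<close>)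
  finally show ?thesis .
qed

lemma ent_le:
  assumes "\<And>w. \<exists>C. \<forall>t>0. log 2 (real (card (st_patterns S \<Phi> w t))) / real t \<le> L + C / real t"
  shows "ca_entropy S \<Phi> \<le> ereal L"
  unfolding ca_entropy_def
proof (rule SUP_least)
  fix w
  obtain C where C: "\<forall>t>0. log 2 (real (card (st_patterns S \<Phi> w t))) / real t \<le> L + C / real t"
    using assms by blast
  have "limsup (\<lambda>t. ereal (log 2 (real (card (st_patterns S \<Phi> w t))) / real t))
        \<le> limsup (\<lambda>t. ereal (L + C / real t))"
    by (rule Limsup_mono, rule eventually_mono[OF eventually_gt_at_top[of 0]]) (simp add: C)
  also have "\<dots> = ereal L"
  proof (rule lim_imp_Limsup)
    show "(sequentially::nat filter) \<noteq> bot" by simp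
    have "(\<lambda>t. L + C / real t) \<longlonglongrightarrow> L + 0"
      by (intro tendsto_add tendsto_const lim_const_over_n)
    then show "(\<lambda>t. ereal (L + C / real t)) \<longlonglongrightarrow> ereal L" by (simp add: lim_ereal)
  qed
  finally show "limsup (\<lambda>t. ereal (log 2 (real (card (st_patterns S \<Phi> w t))) / real t)) \<le> ereal L" .
qed

lemma ent_ge:
  assumes "\<forall>t>0. L \<le> log 2 (real (card (st_patterns S \<Phi> w t))) / real t"
  shows "ereal L \<le> ca_entropy S \<Phi>"
  unfolding ca_entropy_def
proof (rule SUP_upper2[of w])
  have "ereal L = limsup (\<lambda>t::nat. ereal L)" by (simp add: Limsup_const)
  also have "\<dots> \<le> limsup (\<lambda>t. ereal (log 2 (real (card (st_patterns S \<Phi> w t))) / real t))"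
    by (rule Limsup_mono, rule eventually_mono[OF eventually_gt_at_top[of 0]]) (simp add: assms)
  finally show "ereal L \<le> limsup (\<lambda>t. ereal (log 2 (real (card (st_patterns S \<Phi> w t))) / real t))" .
qed simp




lemma ca2_iter_offset: "(ca2 f ^^ n) (\<lambda>i. c (i + j)) i' = (ca2 f ^^ n) c (i' + j)"
  by (induction n arbitrary: i') (auto simp: ca2_def)

lemma spread_step:
  assumes "spreading Hl q" "(ca2 Hl ^^ Suc n) b j \<noteq> q"
  shows "(ca2 Hl ^^ n) b j \<noteq> q \<and> (ca2 Hl ^^ n) b (Suc j) \<noteq> q"
  using assms by (auto simp: ca2_def spreading_def)

lemma spread_diag:
  assumes "spreading Hl q" "(ca2 Hl ^^ (n + i)) b 0 \<noteq> q"
  shows "(ca2 Hl ^^ n) b i \<noteq> q"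
  using assms(2)
proof (induction i arbitrary: n)
  case 0 then show ?case by simp
next
  case (Suc i)
  have "(ca2 Hl ^^ Suc n) b i \<noteq> q" by (rule Suc.IH) (use Suc.prems in simp)
  then show ?case using spread_step[OF assms(1)] by blast
qed

lemma const_fixed:
  assumes "spreading Hl q"
  shows "(ca2 Hl ^^ n) (\<lambda>_. q) = (\<lambda>_. q)"
  using assms by (induction n) (auto simp: ca2_def spreading_def)

lemma zero_to_all:
  assumes "\<forall>c. (ca2 Hl ^^ n) c 0 = q"
  shows "(ca2 Hl ^^ n) c = (\<lambda>_. q)"
proof
  fix j
  have "(ca2 Hl ^^ n) c j = (ca2 Hl ^^ n) (\<lambda>i. c (i + j)) 0"
    using ca2_iter_offset[where f=Hl and n=n and c=c and j=j and i'=0] by simp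
  then show "(ca2 Hl ^^ n) c j = q" using assms by simp
qed

lemma nest_H:
  fixes Hl :: "'b::finite \<Rightarrow> 'b \<Rightarrow> 'b"
  assumes "spreading Hl q" "\<forall>n. \<exists>c. (ca2 Hl ^^ n) c 0 \<noteq> q"
  shows "\<exists>b. \<forall>n j. (ca2 Hl ^^ n) b j \<noteq> q"
proof -
  have "\<exists>c\<in>configs (UNIV::'b set). \<forall>n. (ca2 Hl ^^ n) c 0 \<noteq> q"
  proof (rule nest_local)
    show "finite (UNIV::'b set)" by simp
    fix n
    show "\<exists>M. \<forall>c\<in>configs UNIV. \<forall>c'\<in>configs UNIV. (\<forall>i<M. c i = c' i) \<longrightarrow>
          ((ca2 Hl ^^ n) c 0 \<noteq> q) = ((ca2 Hl ^^ n) c' 0 \<noteq> q)"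
    proof (intro exI[of _ "Suc n"] ballI impI)
      fix c c' :: "nat \<Rightarrow> 'b" assume "\<forall>i<Suc n. c i = c' i"
      then have "(ca2 Hl ^^ n) c 0 = (ca2 Hl ^^ n) c' 0" by (intro ca2_local) auto
      then show "((ca2 Hl ^^ n) c 0 \<noteq> q) = ((ca2 Hl ^^ n) c' 0 \<noteq> q)" by simp
    qed
    show "\<exists>c\<in>configs UNIV. (ca2 Hl ^^ n) c 0 \<noteq> q" using assms(2) by (auto simp: configs_def)
    fix c :: "nat \<Rightarrow> 'b"
    show "(ca2 Hl ^^ Suc n) c 0 \<noteq> q \<Longrightarrow> (ca2 Hl ^^ n) c 0 \<noteq> q"
      using spread_step[OF assms(1)] by blast
  qed
  then obtain b where b: "\<forall>n. (ca2 Hl ^^ n) b 0 \<noteq> q" by blast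
  have "(ca2 Hl ^^ n) b j \<noteq> q" for n j by (rule spread_diag[OF assms(1)]) (use b in simp)
  then show ?thesis by blast
qed

lemma nonnil_orbit:
  fixes Hl :: "'b::finite \<Rightarrow> 'b \<Rightarrow> 'b"
  assumes sp: "spreading Hl q" and nn: "\<not> nilpotent_on UNIV (ca2 Hl)"
  shows "\<exists>b. \<forall>n j. (ca2 Hl ^^ n) b j \<noteq> q"
proof (rule nest_H[OF sp], rule ccontr)
  assume "\<not> (\<forall>n. \<exists>c. (ca2 Hl ^^ n) c 0 \<noteq> q)"
  then obtain n where n: "\<forall>c. (ca2 Hl ^^ n) c 0 = q" by blast
  have "nilpotent_on UNIV (ca2 Hl)"
    unfolding nilpotent_on_def
  proof (intro bexI[of _ q] conjI ballI)
    show "ca2 Hl (\<lambda>_. q) = (\<lambda>_. q)" using const_fixed[OF sp, of 1] by simp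
    fix c :: "nat \<Rightarrow> 'b"
    show "\<exists>n. (ca2 Hl ^^ n) c = (\<lambda>_. q)" using zero_to_all[OF n] by blast
  qed simp
  with nn show False by simp
qed

lemma nil_uniform:
  fixes Hl :: "'b::finite \<Rightarrow> 'b \<Rightarrow> 'b"
  assumes sp: "spreading Hl q" and nl: "nilpotent_on UNIV (ca2 Hl)"
  shows "\<exists>N. \<forall>n\<ge>N. \<forall>c. (ca2 Hl ^^ n) c = (\<lambda>_. q)"
proof -
  obtain q' where q': "ca2 Hl (\<lambda>_. q') = (\<lambda>_. q')" "\<forall>c. \<exists>n. (ca2 Hl ^^ n) c = (\<lambda>_. q')"
    using nl by (auto simp: nilpotent_on_def configs_def)
  obtain n0 where "(ca2 Hl ^^ n0) (\<lambda>_. q) = (\<lambda>_. q')" using q' by blast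
  then have qq: "q' = q" using const_fixed[OF sp, of n0] by (metis)
  have "\<exists>N. \<forall>c. (ca2 Hl ^^ N) c 0 = q"
  proof (rule ccontr)
    assume "\<not> ?thesis"
    then have "\<forall>n. \<exists>c. (ca2 Hl ^^ n) c 0 \<noteq> q" by blast
    from nest_H[OF sp this] obtain b where b: "\<forall>n j. (ca2 Hl ^^ n) b j \<noteq> q" by blast
    obtain n where "(ca2 Hl ^^ n) b = (\<lambda>_. q)" using q' qq by blast
    with b show False by (metis)
  qed
  then obtain N where N: "\<forall>c. (ca2 Hl ^^ N) c 0 = q" by blast
  have "(ca2 Hl ^^ n) c = (\<lambda>_. q)" if "n \<ge> N" for n c
  proof -
    have "(ca2 Hl ^^ n) c = (ca2 Hl ^^ (n - N)) ((ca2 Hl ^^ N) c)"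
      using that by (metis funpow_add le_add_diff_inverse2 o_apply)
    also have "\<dots> = (\<lambda>_. q)" using zero_to_all[OF N] const_fixed[OF sp] by simp
    finally show ?thesis .
  qed
  then show ?thesis by blast
qed




abbreviation fb :: "(nat \<Rightarrow> nat) \<Rightarrow> (nat \<Rightarrow> nat)" where
  "fb \<equiv> ca2 (\<lambda>x y. rho y x)"

definition Fam :: "(nat \<Rightarrow> nat) \<Rightarrow> bool" where
  "Fam c \<longleftrightarrow> (\<forall>j. (even j \<longrightarrow> c j \<in> {0,1}) \<and> (odd j \<longrightarrow> c j = 0))"

lemma fam_parity:
  assumes "Fam c"
  shows "(even (j + s) \<longrightarrow> (fb ^^ s) c j \<in> {0,1}) \<and> (odd (j + s) \<longrightarrow> (fb ^^ s) c j \<in> {0,2})"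
proof (induction s arbitrary: j)
  case 0 then show ?case using assms by (auto simp: Fam_def)
next
  case (Suc s)
  have e: "(fb ^^ Suc s) c j = rho ((fb ^^ s) c (Suc j)) ((fb ^^ s) c j)" by (simp add: ca2_def)
  note h1 = Suc.IH[of j] and h2 = Suc.IH[of "Suc j"]
  show ?case
  proof (cases "even (j + s)")
    case True
    then have "(fb ^^ s) c j \<in> {0,1}" "(fb ^^ s) c (Suc j) \<in> {0,2}" using h1 h2 by auto
    then show ?thesis unfolding e using True by (auto simp: rho_def)
  next
    case False
    then have "(fb ^^ s) c j \<in> {0,2}" "(fb ^^ s) c (Suc j) \<in> {0,1}" using h1 h2 by auto
    then show ?thesis unfolding e using False by (auto simp: rho_def)
  qed
qed


lemma fam_diff:
  assumes c: "Fam c" and c': "Fam c'" and agree: "\<forall>i<n. c i = c' i" and ne: "c n \<noteq> c' n" and ev: "even n"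
  shows "s \<le> n \<Longrightarrow> (fb ^^ s) c (n - s) \<noteq> (fb ^^ s) c' (n - s)"
proof (induction s)
  case 0 then show ?case using ne by simp
next
  case (Suc s)
  define j where "j = n - Suc s"
  have sj: "Suc j = n - s" and js: "j + s = n - 1" using Suc.prems by (auto simp: j_def)
  have e: "(fb ^^ Suc s) d j = rho ((fb ^^ s) d (Suc j)) ((fb ^^ s) d j)" for d by (simp add: ca2_def)
  have yy: "(fb ^^ s) c (Suc j) \<noteq> (fb ^^ s) c' (Suc j)" using Suc by (simp add: sj)
  have par1: "even (Suc j + s)" using ev Suc.prems by (simp add: sj)
  have par2: "odd (j + s)" using ev Suc.prems js by (cases n) auto
  have y1: "(fb ^^ s) c (Suc j) \<in> {0,1}" "(fb ^^ s) c' (Suc j) \<in> {0,1}"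
    using fam_parity[OF c, of "Suc j" s] fam_parity[OF c', of "Suc j" s] par1 by auto
  have xx: "(fb ^^ s) c j = (fb ^^ s) c' j"
    by (rule ca2_local) (use agree js Suc.prems in auto)
  have x1: "(fb ^^ s) c j \<in> {0,2}" using fam_parity[OF c, of j s] par2 by auto
  have "rho ((fb ^^ s) c (Suc j)) ((fb ^^ s) c j) \<noteq> rho ((fb ^^ s) c' (Suc j)) ((fb ^^ s) c' j)"
    using yy y1 x1 xx by (auto simp: rho_def)
  then show ?case unfolding j_def[symmetric] e .
qed

lemma fam_inj:
  assumes c: "Fam c" and c': "Fam c'" and d: "i0 < T" "c i0 \<noteq> c' i0"
  shows "\<exists>n<T. (fb ^^ n) c 0 \<noteq> (fb ^^ n) c' 0"
proof -
  define n where "n = (LEAST i. c i \<noteq> c' i)"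
  have n1: "c n \<noteq> c' n" unfolding n_def by (rule LeastI[of _ i0]) (use d in auto)
  have n2: "n \<le> i0" unfolding n_def by (rule Least_le) (use d in auto)
  have n3: "\<forall>i<n. c i = c' i" unfolding n_def using not_less_Least by blast
  have "even n"
  proof (rule ccontr)
    assume "odd n"
    then have "c n = 0" "c' n = 0" using c c' unfolding Fam_def by blast+
    with n1 show False by simp
  qed
  from fam_diff[OF c c' n3 n1 this, of n] have "(fb ^^ n) c 0 \<noteq> (fb ^^ n) c' 0" by simp
  then show ?thesis using n2 d by (intro exI[of _ n]) auto
qed




lemma gen_bound:
  assumes "finite S"
  shows "finite (st_patterns S (ca2 f) w t) \<and> card (st_patterns S (ca2 f) w t) \<le> card S ^ (w + t)"
proof -
  have "finite (st_patterns S (ca2 f) w t) \<and> card (st_patterns S (ca2 f) w t) \<le> card (PiE {..<w+t} (\<lambda>_. S))"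
  proof (rule st_card_le_gen[where g = "\<lambda>c. restrict c {..<w+t}"])
    show "(\<lambda>c. restrict c {..<w + t}) ` configs S \<subseteq> PiE {..<w + t} (\<lambda>_. S)"
      by (auto simp: configs_def PiE_iff split: if_splits)
    show "finite (PiE {..<w + t} (\<lambda>_. S))" using assms by (simp add: finite_PiE)
    fix c c' assume "c \<in> configs S" "c' \<in> configs S" "restrict c {..<w + t} = restrict c' {..<w + t}"
    then have eq: "\<forall>i<w+t. c i = c' i" by (metis lessThan_iff restrict_apply')
    show "\<forall>i<t. \<forall>j<w. (ca2 f ^^ i) c j = (ca2 f ^^ i) c' j"
      using eq by (auto intro!: ca2_local)
  qed
  moreover have "card (PiE {..<w+t} (\<lambda>_. S)) = card S ^ (w + t)"
    by (simp add: card_PiE)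
  ultimately show ?thesis by simp
qed

lemma rho_range: "rho y x \<in> {0,1,2}"
  by (simp add: rho_def)

lemma F2k_len: "length (F2k_local x y) = min (length x) (length y)"
  by (simp add: F2k_local_def)

lemma F2k_nth: "m < length x \<Longrightarrow> m < length y \<Longrightarrow> F2k_local x y ! m = rho (y ! m) (x ! m)"
  by (simp add: F2k_local_def)

lemma F2k_alph: "x \<in> alphA k \<Longrightarrow> y \<in> alphA k \<Longrightarrow> F2k_local x y \<in> alphA k"
proof -
  have "set (F2k_local x y) \<subseteq> {0,1,2}"
    unfolding F2k_local_def by (auto simp: rho_def split: if_splits)
  then show "x \<in> alphA k \<Longrightarrow> y \<in> alphA k \<Longrightarrow> F2k_local x y \<in> alphA k"
    by (auto simp: alphA_def F2k_len)
qed

lemma finite_alphA: "finite (alphA k)"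
proof -
  have "alphA k = {xs. set xs \<subseteq> {0,1,2} \<and> length xs = 2 * k}" by (auto simp: alphA_def)
  then show ?thesis using finite_lists_length_eq[of "{0::nat,1,2}" "2*k"] by simp
qed

lemma alphA_ne: "replicate (2*k) 0 \<in> alphA k"
  by (auto simp: alphA_def)

lemma F2k_iter:
  assumes a: "\<forall>i. a i \<in> alphA k" and m: "m < 2 * k"
  shows "((ca2 F2k_local ^^ s) a j) ! m = (fb ^^ s) (\<lambda>i. a i ! m) j \<and> (ca2 F2k_local ^^ s) a j \<in> alphA k"
proof (induction s arbitrary: j)
  case 0 then show ?case using a by simp
next
  case (Suc s)
  have l: "length ((ca2 F2k_local ^^ s) a i) = 2 * k" for i using Suc.IH[of i] by (simp add: alphA_def)
  show ?case unfolding ca2_Suc using Suc.IH[of j] Suc.IH[of "Suc j"] m l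
    by (auto simp: F2k_nth F2k_alph)
qed

lemma calF_good:
  assumes b: "\<forall>n j. (ca2 Hl ^^ n) (snd \<circ> C) j \<noteq> q"
  shows "(ca2 (calF_local Hl q) ^^ s) C = (\<lambda>j. ((ca2 F2k_local ^^ s) (fst \<circ> C) j, (ca2 Hl ^^ s) (snd \<circ> C) j))"
proof (induction s)
  case 0 then show ?case by simp
next
  case (Suc s)
  have g: "Hl ((ca2 Hl ^^ s) (snd \<circ> C) j) ((ca2 Hl ^^ s) (snd \<circ> C) (Suc j)) \<noteq> q" for j
    using b[rule_format, of "Suc s" j] by (simp add: ca2_def)
  show ?case
    by (rule ext) (simp only: ca2_Suc Suc, simp add: calF_local_def g)
qed

lemma calG_iter:
  "(ca2 (calG_local Hl) ^^ s) C = (\<lambda>j. (fst (C j), (ca2 Hl ^^ s) (snd \<circ> C) j))"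
proof (induction s)
  case 0 then show ?case by simp
next
  case (Suc s)
  show ?case by (rule ext) (simp only: ca2_Suc Suc, simp add: calG_local_def ca2_def)
qed




lemma lowerF:
  fixes Hl :: "'b \<Rightarrow> 'b \<Rightarrow> 'b"
  assumes b: "\<forall>n j. (ca2 Hl ^^ n) b j \<noteq> q" and t: "t > 0" and finB: "finite (UNIV::'b set)"
  shows "real k \<le> log 2 (real (card (st_patterns (alphA k \<times> (UNIV::'b set)) (ca2 (calF_local Hl q)) 1 t))) / real t"
proof -
  let ?S = "alphA k \<times> (UNIV::'b set)"
  let ?\<Phi> = "ca2 (calF_local Hl q)"
  define N where "N = (t + 1) div 2"
  define P where "P = PiE ({..<2*k} \<times> {..<N}) (\<lambda>_. UNIV :: bool set)"
  define cf :: "(nat \<times> nat \<Rightarrow> bool) \<Rightarrow> nat \<Rightarrow> nat \<Rightarrow> nat" where "cf \<beta> m i = (if even i \<and> i div 2 < N \<and> \<beta> (m, i div 2) then 1 else (0::nat))" for \<beta> m i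
  define Cfg where "Cfg \<beta> = (\<lambda>i. (map (\<lambda>m. cf \<beta> m i) [0..<2*k], b i))" for \<beta>
  have finS: "finite ?S" using finite_alphA finB by simp
  have fin: "finite (st_patterns ?S ?\<Phi> 1 t)" using gen_bound[OF finS] by blast
  have Cfg_in: "Cfg \<beta> \<in> configs ?S" for \<beta>
    by (auto simp: configs_def Cfg_def alphA_def cf_def)
  have snd_Cfg: "snd \<circ> Cfg \<beta> = b" for \<beta> by (auto simp: Cfg_def)
  have fam: "Fam (cf \<beta> m)" for \<beta> m by (auto simp: Fam_def cf_def)
  have val: "fst ((?\<Phi> ^^ n) (Cfg \<beta>) 0) ! m = (fb ^^ n) (cf \<beta> m) 0" if m: "m < 2 * k" for \<beta> n m
  proof -
    have "(?\<Phi> ^^ n) (Cfg \<beta>) = (\<lambda>j. ((ca2 F2k_local ^^ n) (fst \<circ> Cfg \<beta>) j, (ca2 Hl ^^ n) (snd \<circ> Cfg \<beta>) j))"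
      by (rule calF_good) (simp add: snd_Cfg b)
    then have "fst ((?\<Phi> ^^ n) (Cfg \<beta>) 0) = (ca2 F2k_local ^^ n) (fst \<circ> Cfg \<beta>) 0" by simp
    also have "\<dots> ! m = (fb ^^ n) (\<lambda>i. (fst \<circ> Cfg \<beta>) i ! m) 0"
    proof -
      have "\<forall>i. (fst \<circ> Cfg \<beta>) i \<in> alphA k" using Cfg_in[of \<beta>] by (auto simp: configs_def mem_Times_iff)
      from F2k_iter[OF this m] show ?thesis by blast
    qed
    also have "(\<lambda>i. (fst \<circ> Cfg \<beta>) i ! m) = cf \<beta> m" using m by (auto simp: Cfg_def)
    finally show ?thesis .
  qed
  have inj: "inj_on (pat ?\<Phi> 1 t \<circ> Cfg) P"
  proof (rule inj_onI, rule ccontr)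
    fix \<beta> \<beta>' assume \<beta>: "\<beta> \<in> P" "\<beta>' \<in> P" and eq: "(pat ?\<Phi> 1 t \<circ> Cfg) \<beta> = (pat ?\<Phi> 1 t \<circ> Cfg) \<beta>'"
      and ne: "\<beta> \<noteq> \<beta>'"
    then obtain x where x: "\<beta> x \<noteq> \<beta>' x" by blast
    then have "x \<in> {..<2*k} \<times> {..<N}" using \<beta> unfolding P_def by (metis PiE_arb)
    then obtain m jj where mj: "x = (m, jj)" "m < 2*k" "jj < N" by auto
    have "2 * jj < t" using mj(3) by (simp add: N_def)
    moreover have "cf \<beta> m (2 * jj) \<noteq> cf \<beta>' m (2 * jj)" using x mj by (auto simp: cf_def)
    ultimately obtain n where n: "n < t" "(fb ^^ n) (cf \<beta> m) 0 \<noteq> (fb ^^ n) (cf \<beta>' m) 0"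
      using fam_inj[OF fam fam] by blast
    have "pat ?\<Phi> 1 t (Cfg \<beta>) n 0 = pat ?\<Phi> 1 t (Cfg \<beta>') n 0" using eq by simp
    then have "(?\<Phi> ^^ n) (Cfg \<beta>) 0 = (?\<Phi> ^^ n) (Cfg \<beta>') 0" using n(1) by (simp add: pat_def)
    then have "fst ((?\<Phi> ^^ n) (Cfg \<beta>) 0) ! m = fst ((?\<Phi> ^^ n) (Cfg \<beta>') 0) ! m" by simp
    then show False using val[OF mj(2)] n(2) by simp
  qed
  have cardP: "card P = 2 ^ (2 * k * N)"
    by (simp add: P_def card_PiE card_cartesian_product)
  have "card P = card ((pat ?\<Phi> 1 t \<circ> Cfg) ` P)" by (rule card_image[OF inj, symmetric])
  also have "\<dots> \<le> card (st_patterns ?S ?\<Phi> 1 t)"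
    by (rule card_mono[OF fin]) (auto simp: st_patterns_pat intro!: imageI Cfg_in)
  finally have cge: "(2::nat) ^ (2 * k * N) \<le> card (st_patterns ?S ?\<Phi> 1 t)" using cardP by simp
  have tn: "t \<le> 2 * N" unfolding N_def by presburger
  have "k * t \<le> 2 * k * N" using mult_le_mono2[OF tn, of k] by (simp add: mult.assoc mult.left_commute)
  then have "real k * real t \<le> real (2 * k * N)" by (metis of_nat_le_iff of_nat_mult)
  also have "real (2 * k * N) = log 2 (real ((2::nat) ^ (2 * k * N)))"
    by (simp add: log_nat_power)
  also have "\<dots> \<le> log 2 (real (card (st_patterns ?S ?\<Phi> 1 t)))"
  proof -
    have "(0::nat) < 2 ^ (2 * k * N)" by simp
    then have pos: "0 < card (st_patterns ?S ?\<Phi> 1 t)" using cge by linarith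
    have le: "real ((2::nat) ^ (2 * k * N)) \<le> real (card (st_patterns ?S ?\<Phi> 1 t))" using cge by linarith
    show ?thesis by (rule log_le_cancel_iff[THEN iffD2]) (use pos le in \<open>simp_all\<close>)
  qed
  finally show ?thesis using t by (simp add: pos_le_divide_eq)
qed




lemma pats_ne:
  assumes "S \<noteq> {}" "finite (st_patterns S \<Phi> w t)"
  shows "0 < card (st_patterns S \<Phi> w t)"
proof -
  obtain x where "x \<in> S" using assms by blast
  then have "(\<lambda>_. x) \<in> configs S" by (simp add: configs_def)
  then have "st_patterns S \<Phi> w t \<noteq> {}" by (auto simp: st_patterns_pat)
  then show ?thesis using assms(2) by (simp add: card_gt_0_iff)
qed

lemma arith_aux1: fixes w t :: nat and a b :: real assumes "t > 0"
  shows "(real w * a + real (w + t) * b) / real t = b + (real w * (a + b)) / real t"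
  using assms by (simp add: field_simps)

lemma arith_aux2: fixes cA cB w t :: nat assumes "cA > 0" "cB > 0"
  shows "log 2 (real (cA ^ w * cB ^ (w + t))) = real w * log 2 (real cA) + real (w + t) * log 2 (real cB)"
  using assms by (simp add: log_mult log_nat_power)

lemma log_mono_nat: fixes x y :: nat assumes "0 < x" "x \<le> y"
  shows "log 2 (real x) \<le> log 2 (real y)"
  using assms by simp

lemma upperG:
  fixes Hl :: "'b::finite \<Rightarrow> 'b \<Rightarrow> 'b"
  shows "ca_entropy (alphA k \<times> (UNIV::'b set)) (ca2 (calG_local Hl)) \<le> ereal (log 2 (real CARD('b)))"
proof (rule ent_le)
  fix w
  let ?S = "alphA k \<times> (UNIV::'b set)"
  define cA where "cA = card (alphA k)"
  define cB where "cB = CARD('b)"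
  have cA: "cA > 0" unfolding cA_def using finite_alphA alphA_ne card_gt_0_iff by blast
  have cB: "cB > 0" unfolding cB_def by simp
  show "\<exists>C. \<forall>t>0. log 2 (real (card (st_patterns ?S (ca2 (calG_local Hl)) w t))) / real t
           \<le> log 2 (real CARD('b)) + C / real t"
  proof (intro exI allI impI)
    fix t :: nat assume t: "t > 0"
    let ?E = "PiE {..<w} (\<lambda>_. alphA k) \<times> PiE {..<w+t} (\<lambda>_. UNIV::'b set)"
    have b: "finite (st_patterns ?S (ca2 (calG_local Hl)) w t) \<and> card (st_patterns ?S (ca2 (calG_local Hl)) w t) \<le> card ?E"
    proof (rule st_card_le_gen[where g = "\<lambda>c. (restrict (fst \<circ> c) {..<w}, restrict (snd \<circ> c) {..<w+t})"])
      show "(\<lambda>c. (restrict (fst \<circ> c) {..<w}, restrict (snd \<circ> c) {..<w+t})) ` configs ?S \<subseteq> ?E"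
      proof (rule image_subsetI)
        fix c assume "c \<in> configs ?S"
        then have "\<forall>i. fst (c i) \<in> alphA k" by (auto simp: configs_def mem_Times_iff)
        then have "restrict (fst \<circ> c) {..<w} \<in> PiE {..<w} (\<lambda>_. alphA k)"
          by (subst restrict_PiE_iff) simp
        moreover have "restrict (snd \<circ> c) {..<w+t} \<in> PiE {..<w+t} (\<lambda>_. UNIV::'b set)"
          by (subst restrict_PiE_iff) simp
        ultimately show "(restrict (fst \<circ> c) {..<w}, restrict (snd \<circ> c) {..<w+t}) \<in> ?E" by (rule SigmaI)
      qed
      show "finite ?E" using finite_alphA by (simp add: finite_PiE)
      fix c c' assume "c \<in> configs ?S" "c' \<in> configs ?S"
        "(restrict (fst \<circ> c) {..<w}, restrict (snd \<circ> c) {..<w+t}) = (restrict (fst \<circ> c') {..<w}, restrict (snd \<circ> c') {..<w+t})"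
      then have r1: "restrict (fst \<circ> c) {..<w} = restrict (fst \<circ> c') {..<w}"
        and r2: "restrict (snd \<circ> c) {..<w+t} = restrict (snd \<circ> c') {..<w+t}" by simp_all
      have e1: "\<forall>i<w. fst (c i) = fst (c' i)"
      proof (intro allI impI)
        fix i assume "i < w" then show "fst (c i) = fst (c' i)" using fun_cong[OF r1, of i] by simp
      qed
      have e2: "\<forall>i<w+t. snd (c i) = snd (c' i)"
      proof (intro allI impI)
        fix i assume "i < w+t" then show "snd (c i) = snd (c' i)" using fun_cong[OF r2, of i] by simp
      qed
      show "\<forall>i<t. \<forall>j<w. (ca2 (calG_local Hl) ^^ i) c j = (ca2 (calG_local Hl) ^^ i) c' j"
      proof (intro allI impI)
        fix i j assume ij: "i < t" "j < w"
        have "(ca2 Hl ^^ i) (snd \<circ> c) j = (ca2 Hl ^^ i) (snd \<circ> c') j"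
          by (rule ca2_local) (use e2 ij in auto)
        then show "(ca2 (calG_local Hl) ^^ i) c j = (ca2 (calG_local Hl) ^^ i) c' j"
          using e1 ij by (simp add: calG_iter)
      qed
    qed
    have cE: "card ?E = cA ^ w * cB ^ (w + t)"
      by (simp add: card_cartesian_product card_PiE cA_def cB_def)
    have pos: "0 < card (st_patterns ?S (ca2 (calG_local Hl)) w t)"
      using pats_ne[of ?S] b alphA_ne by blast
    have "log 2 (real (card (st_patterns ?S (ca2 (calG_local Hl)) w t))) \<le> log 2 (real (cA ^ w * cB ^ (w + t)))"
      by (rule log_mono_nat[OF pos]) (use b cE in simp)
    also have "\<dots> = real w * log 2 (real cA) + real (w + t) * log 2 (real cB)"
      by (rule arith_aux2[OF cA cB])
    finally have "log 2 (real (card (st_patterns ?S (ca2 (calG_local Hl)) w t))) / real t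
        \<le> (real w * log 2 (real cA) + real (w + t) * log 2 (real cB)) / real t"
      using t by (simp add: divide_right_mono)
    also have "\<dots> = log 2 (real cB) + (real w * (log 2 (real cA) + log 2 (real cB))) / real t"
      by (rule arith_aux1[OF t])
    finally show "log 2 (real (card (st_patterns ?S (ca2 (calG_local Hl)) w t))) / real t
           \<le> log 2 (real CARD('b)) + (real w * (log 2 (real cA) + log 2 (real cB))) / real t"
      by (simp add: cB_def)
  qed
qed

lemma freeze_zero:
  assumes fin: "finite S" and ne: "S \<noteq> {}"
    and fr: "\<And>c m. c \<in> configs S \<Longrightarrow> (ca2 f ^^ (N + m)) c = (ca2 f ^^ N) c"
  shows "ca_entropy S (ca2 f) = 0"
proof (rule antisym)
  show "ca_entropy S (ca2 f) \<le> 0"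
    using ent_le[where L=0]
  proof -
    have "ca_entropy S (ca2 f) \<le> ereal 0"
    proof (rule ent_le)
      fix w
      show "\<exists>C. \<forall>t>0. log 2 (real (card (st_patterns S (ca2 f) w t))) / real t \<le> 0 + C / real t"
      proof (intro exI allI impI)
        fix t :: nat assume t: "t > 0"
        have b: "finite (st_patterns S (ca2 f) w t) \<and> card (st_patterns S (ca2 f) w t) \<le> card (PiE {..<w+N} (\<lambda>_. S))"
        proof (rule st_card_le_gen[where g = "\<lambda>c. restrict c {..<w+N}"])
          show "(\<lambda>c. restrict c {..<w+N}) ` configs S \<subseteq> PiE {..<w+N} (\<lambda>_. S)"
            by (auto simp: configs_def PiE_iff split: if_splits)
          show "finite (PiE {..<w+N} (\<lambda>_. S))" using fin by (simp add: finite_PiE)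
          fix c c' assume cc: "c \<in> configs S" "c' \<in> configs S" "restrict c {..<w+N} = restrict c' {..<w+N}"
          then have eq: "\<forall>i<w+N. c i = c' i" by (metis lessThan_iff restrict_apply')
          show "\<forall>i<t. \<forall>j<w. (ca2 f ^^ i) c j = (ca2 f ^^ i) c' j"
          proof (intro allI impI)
            fix i j assume ij: "i < t" "j < w"
            show "(ca2 f ^^ i) c j = (ca2 f ^^ i) c' j"
            proof (cases "i \<le> N")
              case True then show ?thesis by (intro ca2_local) (use eq ij in auto)
            next
              case False
              then have "i = N + (i - N)" by simp
              then have "(ca2 f ^^ i) c = (ca2 f ^^ N) c" "(ca2 f ^^ i) c' = (ca2 f ^^ N) c'"
                using fr[OF cc(1), of "i - N"] fr[OF cc(2), of "i - N"] by metis+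
              moreover have "(ca2 f ^^ N) c j = (ca2 f ^^ N) c' j"
                by (intro ca2_local) (use eq ij in auto)
              ultimately show ?thesis by simp
            qed
          qed
        qed
        have pos: "0 < card (st_patterns S (ca2 f) w t)" using pats_ne[OF ne] b by blast
        have "log 2 (real (card (st_patterns S (ca2 f) w t))) \<le> log 2 (real (card S ^ (w + N)))"
        proof -
          have "card S > 0" using fin ne by (simp add: card_gt_0_iff)
          then have "card (PiE {..<w+N} (\<lambda>_. S)) = card S ^ (w + N)" by (simp add: card_PiE)
          then show ?thesis by (intro log_mono_nat[OF pos]) (use b in simp)
        qed
        then show "log 2 (real (card (st_patterns S (ca2 f) w t))) / real t \<le> 0 + log 2 (real (card S ^ (w + N))) / real t"
          using t by (simp add: divide_right_mono)
      qed
    qed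
    then show ?thesis by (simp add: zero_ereal_def)
  qed
  have "ereal 0 \<le> ca_entropy S (ca2 f)"
  proof (rule ent_ge[where w=0])
    show "\<forall>t>0. 0 \<le> log 2 (real (card (st_patterns S (ca2 f) 0 t))) / real t"
    proof (intro allI impI)
      fix t :: nat assume "t > 0"
      have "finite (st_patterns S (ca2 f) 0 t)" using gen_bound[OF fin] by blast
      then have "0 < card (st_patterns S (ca2 f) 0 t)" using pats_ne[OF ne] by blast
      then show "0 \<le> log 2 (real (card (st_patterns S (ca2 f) 0 t))) / real t" by simp
    qed
  qed
  then show "0 \<le> ca_entropy S (ca2 f)" by (simp add: zero_ereal_def)
qed




definition rinv :: "nat \<Rightarrow> nat \<Rightarrow> nat" where
  "rinv y d = (if y = 1 then (if d = 0 then 2 else if d = 1 then 0 else 1)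
               else (if d = 0 then 0 else if d = 1 then 2 else 1))"

definition Finv :: "nat list \<Rightarrow> nat list \<Rightarrow> nat list" where
  "Finv d e = map2 (\<lambda>dd x. rinv x dd) d e"

lemma S1: "x \<in> {0,1,2} \<Longrightarrow> rinv y (rho y x) = x"
  by (simp; elim disjE; cases "y = 1"; simp add: rinv_def rho_def)
lemma S2: "d \<in> {0,1,2} \<Longrightarrow> rho y (rinv y d) = d"
  by (simp; elim disjE; cases "y = 1"; simp add: rinv_def rho_def)
lemma S3: "x \<in> {0,1,2} \<Longrightarrow> x' \<in> {0,1,2} \<Longrightarrow> e \<in> {0,1,2} \<Longrightarrow> rinv (rinv x e) d = rinv (rinv x' e) d"
  by (simp; elim disjE; simp add: rinv_def)
lemma S4: "rinv y d \<in> {0,1,2}"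
  by (simp add: rinv_def)

lemma alphA_nth: assumes "xs \<in> alphA k" "i < 2 * k" shows "xs ! i \<in> {0,1,2}"
proof -
  have "length xs = 2 * k" "set xs \<subseteq> {0,1,2}" using assms(1) by (simp_all add: alphA_def)
  then have "xs ! i \<in> set xs" using assms(2) by simp
  then show ?thesis using \<open>set xs \<subseteq> {0,1,2}\<close> by (rule subsetD[rotated])
qed

lemma alphA_len: "xs \<in> alphA k \<Longrightarrow> length xs = 2 * k"
  by (simp add: alphA_def)

lemma Finv_len: "length (Finv x y) = min (length x) (length y)"
  by (simp add: Finv_def)

lemma Finv_nth: "m < length x \<Longrightarrow> m < length y \<Longrightarrow> Finv x y ! m = rinv (y ! m) (x ! m)"
  by (simp add: Finv_def)

lemma Finv_alph: "x \<in> alphA k \<Longrightarrow> y \<in> alphA k \<Longrightarrow> Finv x y \<in> alphA k"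
proof -
  have "set (Finv x y) \<subseteq> {0,1,2}"
    unfolding Finv_def set_map by (rule image_subsetI) (simp only: case_prod_beta, rule S4)
  then show "x \<in> alphA k \<Longrightarrow> y \<in> alphA k \<Longrightarrow> Finv x y \<in> alphA k"
    by (auto simp: alphA_def Finv_len)
qed

lemma L2: assumes "x \<in> alphA k" "y \<in> alphA k" shows "Finv (F2k_local x y) y = x"
proof (rule nth_equalityI)
  show "length (Finv (F2k_local x y) y) = length x" using assms by (simp add: Finv_len F2k_len alphA_len)
  fix i assume "i < length (Finv (F2k_local x y) y)"
  then have i: "i < 2*k" using assms by (simp add: Finv_len F2k_len alphA_len)
  have xi: "x ! i \<in> {0,1,2}" by (rule alphA_nth[OF assms(1) i])
  show "Finv (F2k_local x y) y ! i = x ! i"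
    using assms i by (simp add: Finv_nth F2k_nth F2k_len alphA_len S1[OF xi])
qed

lemma L3: assumes "d \<in> alphA k" "y \<in> alphA k" shows "F2k_local (Finv d y) y = d"
proof (rule nth_equalityI)
  show "length (F2k_local (Finv d y) y) = length d" using assms by (simp add: Finv_len F2k_len alphA_len)
  fix i assume "i < length (F2k_local (Finv d y) y)"
  then have i: "i < 2*k" using assms by (simp add: Finv_len F2k_len alphA_len)
  have di: "d ! i \<in> {0,1,2}" by (rule alphA_nth[OF assms(1) i])
  show "F2k_local (Finv d y) y ! i = d ! i"
    using assms i by (simp add: Finv_nth F2k_nth Finv_len alphA_len S2[OF di])
qed

lemma L4: assumes "d \<in> alphA k" "e \<in> alphA k" "x \<in> alphA k" "x' \<in> alphA k"
  shows "Finv d (Finv e x) = Finv d (Finv e x')"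
proof (rule nth_equalityI)
  show "length (Finv d (Finv e x)) = length (Finv d (Finv e x'))" using assms by (simp add: Finv_len alphA_len)
  fix i assume "i < length (Finv d (Finv e x))"
  then have i: "i < 2*k" using assms by (simp add: Finv_len alphA_len)
  have "rinv (rinv (x ! i) (e ! i)) (d ! i) = rinv (rinv (x' ! i) (e ! i)) (d ! i)"
    by (rule S3[OF alphA_nth[OF assms(3) i] alphA_nth[OF assms(4) i] alphA_nth[OF assms(2) i]])
  then show "Finv d (Finv e x) ! i = Finv d (Finv e x') ! i"
    using assms i by (simp add: Finv_nth Finv_len alphA_len)
qed


definition Gam :: "(nat \<Rightarrow> bool) \<Rightarrow> (nat \<Rightarrow> nat list) \<Rightarrow> (nat \<Rightarrow> nat list)" where
  "Gam g a i = (if g i then F2k_local (a i) (a (Suc i)) else a i)"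

definition Ginv :: "(nat \<Rightarrow> bool) \<Rightarrow> (nat \<Rightarrow> nat list) \<Rightarrow> (nat \<Rightarrow> nat list)" where
  "Ginv g d i = (if \<not> g i then d i else
      Finv (d i) (if \<not> g (Suc i) then d (Suc i) else Finv (d (Suc i)) (d (Suc (Suc i)))))"

definition AV :: "nat \<Rightarrow> (nat \<Rightarrow> nat list) \<Rightarrow> bool" where
  "AV k a \<longleftrightarrow> (\<forall>i. a i \<in> alphA k)"

lemma Gam_AV: "AV k a \<Longrightarrow> AV k (Gam g a)"
  by (simp add: AV_def Gam_def F2k_alph)

lemma Ginv_AV: "AV k d \<Longrightarrow> AV k (Ginv g d)"
  by (simp add: AV_def Ginv_def Finv_alph)

lemma Gam_Ginv:
  assumes d: "AV k d"
  shows "Gam g (Ginv g d) = d"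
proof
  fix i
  let ?c = "Ginv g d"
  have dv: "\<And>j. d j \<in> alphA k" using d by (simp add: AV_def)
  have cv: "\<And>j. ?c j \<in> alphA k" using Ginv_AV[OF d] by (simp add: AV_def)
  show "Gam g ?c i = d i"
  proof (cases "g i")
    case False then show ?thesis by (simp add: Gam_def Ginv_def)
  next
    case True
    have ci: "?c i = Finv (d i) (?c (Suc i))"
    proof (cases "g (Suc i)")
      case False then show ?thesis using True by (simp add: Ginv_def)
    next
      case gs: True
      have "?c i = Finv (d i) (Finv (d (Suc i)) (d (Suc (Suc i))))" using True gs by (simp add: Ginv_def)
      also have "\<dots> = Finv (d i) (Finv (d (Suc i)) (if \<not> g (Suc (Suc i)) then d (Suc (Suc i)) else Finv (d (Suc (Suc i))) (d (Suc (Suc (Suc i))))))"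
        by (rule L4) (use dv Finv_alph in auto)
      also have "\<dots> = Finv (d i) (?c (Suc i))" using gs by (simp add: Ginv_def)
      finally show ?thesis .
    qed
    have "Gam g ?c i = F2k_local (?c i) (?c (Suc i))" using True by (simp add: Gam_def)
    also have "\<dots> = d i" unfolding ci by (rule L3[OF dv cv])
    finally show ?thesis .
  qed
qed

lemma Ginv_Gam:
  assumes a: "AV k a"
  shows "Ginv g (Gam g a) = a"
proof
  fix i
  let ?d = "Gam g a"
  have av: "\<And>j. a j \<in> alphA k" using a by (simp add: AV_def)
  have dv: "\<And>j. ?d j \<in> alphA k" using Gam_AV[OF a] by (simp add: AV_def)
  show "Ginv g ?d i = a i"
  proof (cases "g i")
    case False then show ?thesis by (simp add: Gam_def Ginv_def)
  next
    case True
    show ?thesis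
    proof (cases "g (Suc i)")
      case False
      then have "Ginv g ?d i = Finv (F2k_local (a i) (a (Suc i))) (a (Suc i))"
        using True by (simp add: Ginv_def Gam_def)
      then show ?thesis using L2[OF av av] by simp
    next
      case gs: True
      have "Ginv g ?d i = Finv (?d i) (Finv (?d (Suc i)) (?d (Suc (Suc i))))"
        using True gs by (simp add: Ginv_def)
      also have "\<dots> = Finv (?d i) (Finv (?d (Suc i)) (a (Suc (Suc i))))"
        by (rule L4) (use dv av in auto)
      also have "Finv (?d (Suc i)) (a (Suc (Suc i))) = a (Suc i)"
        using gs L2[OF av av] by (simp add: Gam_def)
      also have "Finv (?d i) (a (Suc i)) = a i"
        using True L2[OF av av] by (simp add: Gam_def)
      finally show ?thesis .
    qed
  qed
qed

definition gate :: "('b \<Rightarrow> 'b \<Rightarrow> 'b) \<Rightarrow> 'b \<Rightarrow> (nat \<Rightarrow> 'b) \<Rightarrow> nat \<Rightarrow> bool" where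
  "gate Hl q b i \<longleftrightarrow> Hl (b i) (b (Suc i)) \<noteq> q"

primrec fwd :: "('b \<Rightarrow> 'b \<Rightarrow> 'b) \<Rightarrow> 'b \<Rightarrow> (nat \<Rightarrow> 'b) \<Rightarrow> nat \<Rightarrow> (nat \<Rightarrow> nat list) \<Rightarrow> (nat \<Rightarrow> nat list)" where
  "fwd Hl q b 0 a = a"
| "fwd Hl q b (Suc n) a = Gam (gate Hl q ((ca2 Hl ^^ n) b)) (fwd Hl q b n a)"

primrec bwd :: "('b \<Rightarrow> 'b \<Rightarrow> 'b) \<Rightarrow> 'b \<Rightarrow> (nat \<Rightarrow> 'b) \<Rightarrow> nat \<Rightarrow> (nat \<Rightarrow> nat list) \<Rightarrow> (nat \<Rightarrow> nat list)" where
  "bwd Hl q b 0 d = d"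
| "bwd Hl q b (Suc n) d = bwd Hl q b n (Ginv (gate Hl q ((ca2 Hl ^^ n) b)) d)"

lemma fwd_AV: "AV k a \<Longrightarrow> AV k (fwd Hl q b n a)"
  by (induction n) (auto intro: Gam_AV)

lemma bwd_AV: "AV k d \<Longrightarrow> AV k (bwd Hl q b n d)"
  by (induction n arbitrary: d) (auto intro: Ginv_AV)

lemma bwd_fwd: "AV k a \<Longrightarrow> bwd Hl q b n (fwd Hl q b n a) = a"
proof (induction n)
  case 0 then show ?case by simp
next
  case (Suc n)
  have "Ginv (gate Hl q ((ca2 Hl ^^ n) b)) (Gam (gate Hl q ((ca2 Hl ^^ n) b)) (fwd Hl q b n a)) = fwd Hl q b n a"
    by (rule Ginv_Gam[OF fwd_AV[OF Suc.prems]])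
  then have "bwd Hl q b (Suc n) (fwd Hl q b (Suc n) a) = bwd Hl q b n (fwd Hl q b n a)"
    by simp
  then show ?case using Suc by simp
qed

lemma fwd_bwd: "AV k d \<Longrightarrow> fwd Hl q b n (bwd Hl q b n d) = d"
proof (induction n arbitrary: d)
  case 0 then show ?case by simp
next
  case (Suc n)
  have "fwd Hl q b (Suc n) (bwd Hl q b (Suc n) d)
      = Gam (gate Hl q ((ca2 Hl ^^ n) b)) (fwd Hl q b n (bwd Hl q b n (Ginv (gate Hl q ((ca2 Hl ^^ n) b)) d)))"
    by simp
  also have "\<dots> = Gam (gate Hl q ((ca2 Hl ^^ n) b)) (Ginv (gate Hl q ((ca2 Hl ^^ n) b)) d)"
    using Suc.IH[OF Ginv_AV[OF Suc.prems]] by simp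
  also have "\<dots> = d" by (rule Gam_Ginv[OF Suc.prems])
  finally show ?case .
qed

lemma calF_decomp:
  "(ca2 (calF_local Hl q) ^^ n) C = (\<lambda>j. (fwd Hl q (snd \<circ> C) n (fst \<circ> C) j, (ca2 Hl ^^ n) (snd \<circ> C) j))"
proof (induction n)
  case 0 then show ?case by simp
next
  case (Suc n)
  show ?case
    by (rule ext) (simp only: ca2_Suc Suc, simp add: calF_local_def Gam_def gate_def ca2_def o_def)
qed


lemma calF_closed:
  "x \<in> alphA k \<times> (UNIV::'b set) \<Longrightarrow> y \<in> alphA k \<times> UNIV \<Longrightarrow> calF_local Hl q x y \<in> alphA k \<times> (UNIV::'b set)"
  by (auto simp: calF_local_def mem_Times_iff F2k_alph)

lemma conj_nil:
  fixes Hl :: "'b::finite \<Rightarrow> 'b \<Rightarrow> 'b"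
  assumes sp: "spreading Hl q" and N: "\<forall>n\<ge>N. \<forall>c. (ca2 Hl ^^ n) c = (\<lambda>_. q)"
  shows "strongly_conjugate (alphA k \<times> (UNIV::'b set)) (ca2 (calF_local Hl q)) (ca2 (calG_local Hl))"
proof -
  let ?S = "alphA k \<times> (UNIV::'b set)"
  let ?\<Phi> = "ca2 (calF_local Hl q)"
  let ?\<Psi> = "ca2 (calG_local Hl)"
  define \<phi> where "\<phi> C = (\<lambda>j. (fst ((?\<Phi> ^^ N) C j), snd (C j)))" for C
  have qq: "Hl q q = q" using sp by (simp add: spreading_def)
  have HN: "(ca2 Hl ^^ N) c = (\<lambda>_. q)" for c using N by simp
  have dec: "fst ((?\<Phi> ^^ N) C j) = fwd Hl q (snd \<circ> C) N (fst \<circ> C) j" for C j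
    by (simp add: calF_decomp)
  have fixX: "?\<Phi> ((?\<Phi> ^^ N) C) = (?\<Phi> ^^ N) C" for C
  proof
    fix j
    have sndX: "snd ((?\<Phi> ^^ N) C i) = q" for i by (simp add: calF_decomp HN)
    show "?\<Phi> ((?\<Phi> ^^ N) C) j = (?\<Phi> ^^ N) C j"
      using sndX[of j] sndX[of "Suc j"] qq by (simp add: ca2_def calF_local_def prod_eq_iff)
  qed
  have comm: "\<phi> (?\<Phi> C) = ?\<Psi> (\<phi> C)" for C
  proof
    fix j
    have "(?\<Phi> ^^ N) (?\<Phi> C) = ?\<Phi> ((?\<Phi> ^^ N) C)" by (simp add: funpow_swap1)
    then have e: "(?\<Phi> ^^ N) (?\<Phi> C) = (?\<Phi> ^^ N) C" using fixX by simp
    have s: "snd (?\<Phi> C j) = Hl (snd (C j)) (snd (C (Suc j)))" by (simp add: ca2_def calF_local_def)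
    show "\<phi> (?\<Phi> C) j = ?\<Psi> (\<phi> C) j"
      using e s by (simp add: \<phi>_def ca2_def calG_local_def)
  qed
  have shiftc: "\<phi> (shift C) = shift (\<phi> C)" for C
  proof
    fix j
    show "\<phi> (shift C) j = shift (\<phi> C) j"
      by (simp add: \<phi>_def ca2_iter_shift) (simp add: shift_def)
  qed
  have closed: "\<phi> C \<in> configs ?S" if C: "C \<in> configs ?S" for C
  proof -
    have "(?\<Phi> ^^ N) C \<in> configs ?S" by (rule ca2_closed[OF calF_closed C])
    then show ?thesis using C by (auto simp: configs_def \<phi>_def mem_Times_iff)
  qed
  have cont: "continuous_map (shift_space ?S) (shift_space ?S) \<phi>"
  proof (rule local_cont[OF closed])
    fix j
    show "\<exists>M. \<forall>c\<in>configs ?S. \<forall>c'\<in>configs ?S. (\<forall>i<M. c i = c' i) \<longrightarrow> \<phi> c j = \<phi> c' j"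
    proof (intro exI[of _ "Suc (j + N)"] ballI impI)
      fix c c' assume "c \<in> configs ?S" "c' \<in> configs ?S" "\<forall>i<Suc (j + N). c i = c' i"
      then have "(?\<Phi> ^^ N) c j = (?\<Phi> ^^ N) c' j" "c j = c' j" by (auto intro!: ca2_local)
      then show "\<phi> c j = \<phi> c' j" by (simp add: \<phi>_def)
    qed
  qed
  have AVc: "AV k (fst \<circ> C)" if "C \<in> configs ?S" for C
    using that by (auto simp: AV_def configs_def mem_Times_iff)
  have inj: "inj_on \<phi> (configs ?S)"
  proof (rule inj_onI)
    fix C C' assume C: "C \<in> configs ?S" and C': "C' \<in> configs ?S" and eq: "\<phi> C = \<phi> C'"
    have sn: "snd \<circ> C = snd \<circ> C'"
    proof
      fix j show "(snd \<circ> C) j = (snd \<circ> C') j" using fun_cong[OF eq, of j] by (simp add: \<phi>_def)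
    qed
    have fw: "fwd Hl q (snd \<circ> C) N (fst \<circ> C) = fwd Hl q (snd \<circ> C) N (fst \<circ> C')"
    proof
      fix j show "fwd Hl q (snd \<circ> C) N (fst \<circ> C) j = fwd Hl q (snd \<circ> C) N (fst \<circ> C') j"
        using fun_cong[OF eq, of j] sn by (simp add: \<phi>_def dec)
    qed
    have "fst \<circ> C = bwd Hl q (snd \<circ> C) N (fwd Hl q (snd \<circ> C) N (fst \<circ> C))"
      by (rule bwd_fwd[OF AVc[OF C], symmetric])
    also have "\<dots> = bwd Hl q (snd \<circ> C) N (fwd Hl q (snd \<circ> C) N (fst \<circ> C'))" by (simp only: fw)
    also have "\<dots> = fst \<circ> C'" by (rule bwd_fwd[OF AVc[OF C']])
    finally have fs: "fst \<circ> C = fst \<circ> C'" .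
    show "C = C'"
    proof
      fix j show "C j = C' j" using fun_cong[OF sn, of j] fun_cong[OF fs, of j] by (simp add: prod_eq_iff)
    qed
  qed
  have surj: "\<phi> ` configs ?S = configs ?S"
  proof
    show "\<phi> ` configs ?S \<subseteq> configs ?S" by (rule image_subsetI, rule closed)
    show "configs ?S \<subseteq> \<phi> ` configs ?S"
    proof
      fix D assume D: "D \<in> configs ?S"
      define C where "C = (\<lambda>j. (bwd Hl q (snd \<circ> D) N (fst \<circ> D) j, snd (D j)))"
      have sC: "snd \<circ> C = snd \<circ> D" by (auto simp: C_def)
      have fC: "fst \<circ> C = bwd Hl q (snd \<circ> D) N (fst \<circ> D)" by (auto simp: C_def)
      have "AV k (bwd Hl q (snd \<circ> D) N (fst \<circ> D))" by (rule bwd_AV[OF AVc[OF D]])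
      then have Cin: "C \<in> configs ?S" by (auto simp: C_def configs_def AV_def)
      have phiC: "\<phi> C = D"
      proof
        fix j
        have "fst ((?\<Phi> ^^ N) C j) = fwd Hl q (snd \<circ> D) N (bwd Hl q (snd \<circ> D) N (fst \<circ> D)) j"
          by (simp add: dec sC fC)
        also have "\<dots> = fst (D j)" using fwd_bwd[OF AVc[OF D], of Hl q "snd \<circ> D" N] by simp
        finally show "\<phi> C j = D j" by (simp add: \<phi>_def C_def prod_eq_iff)
      qed
      show "D \<in> \<phi> ` configs ?S" by (rule image_eqI[where f=\<phi>, OF phiC[symmetric] Cin])
    qed
  qed
  have homeo: "homeomorphic_map (shift_space ?S) (shift_space ?S) \<phi>"
  proof (rule continuous_imp_homeomorphic_map[OF cont])
    show "compact_space (shift_space ?S)" by (rule compact_shift) (simp add: finite_alphA)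
    show "Hausdorff_space (shift_space ?S)" by (rule hausdorff_shift)
    show "\<phi> ` topspace (shift_space ?S) = topspace (shift_space ?S)" by (simp add: topspace_shift_space surj)
    show "inj_on \<phi> (topspace (shift_space ?S))" by (simp add: topspace_shift_space inj)
  qed
  show ?thesis unfolding strongly_conjugate_def
    by (intro exI[of _ \<phi>] conjI ballI homeo comm shiftc)
qed


lemma iter_fix: "\<Phi> X = X \<Longrightarrow> (\<Phi> ^^ m) X = X"
  by (induction m) auto

lemma freeze_from_fix:
  assumes "\<And>C. \<Phi> ((\<Phi> ^^ N) C) = (\<Phi> ^^ N) C"
  shows "(\<Phi> ^^ (N + m)) C = (\<Phi> ^^ N) C"
proof -
  have "(\<Phi> ^^ (N + m)) C = (\<Phi> ^^ (m + N)) C" by (simp add: add.commute)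
  also have "\<dots> = (\<Phi> ^^ m) ((\<Phi> ^^ N) C)" by (simp add: funpow_add)
  also have "\<dots> = (\<Phi> ^^ N) C" by (rule iter_fix[where \<Phi>=\<Phi>, OF assms])
  finally show ?thesis .
qed

lemma calF_fix:
  assumes sp: "spreading Hl q" and HN: "\<And>c. (ca2 Hl ^^ N) c = (\<lambda>_. q)"
  shows "ca2 (calF_local Hl q) ((ca2 (calF_local Hl q) ^^ N) C) = (ca2 (calF_local Hl q) ^^ N) C"
proof
  fix j
  have qq: "Hl q q = q" using sp by (simp add: spreading_def)
  have sndX: "snd ((ca2 (calF_local Hl q) ^^ N) C i) = q" for i by (simp add: calF_decomp HN)
  show "ca2 (calF_local Hl q) ((ca2 (calF_local Hl q) ^^ N) C) j = (ca2 (calF_local Hl q) ^^ N) C j"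
    using sndX[of j] sndX[of "Suc j"] qq by (simp add: ca2_def calF_local_def prod_eq_iff)
qed

lemma calG_fix:
  assumes sp: "spreading Hl q" and HN: "\<And>c. (ca2 Hl ^^ N) c = (\<lambda>_. q)"
  shows "ca2 (calG_local Hl) ((ca2 (calG_local Hl) ^^ N) C) = (ca2 (calG_local Hl) ^^ N) C"
proof
  fix j
  have qq: "Hl q q = q" using sp by (simp add: spreading_def)
  have sndX: "snd ((ca2 (calG_local Hl) ^^ N) C i) = q" for i by (simp add: calG_iter HN)
  show "ca2 (calG_local Hl) ((ca2 (calG_local Hl) ^^ N) C) j = (ca2 (calG_local Hl) ^^ N) C j"
    using sndX[of j] sndX[of "Suc j"] qq by (simp add: ca2_def calG_local_def prod_eq_iff)
qed

theorem mainTheorem2: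
  fixes Hl :: "'b::finite \<Rightarrow> 'b \<Rightarrow> 'b" and q :: 'b and k :: nat
  assumes "spreading Hl q"
    and "real k > log 2 (real CARD('b))"
  shows "(\<not> nilpotent_on UNIV (ca2 Hl) \<longrightarrow>
            ca_entropy (alphA k \<times> UNIV) (ca2 (calF_local Hl q))
              > ca_entropy (alphA k \<times> UNIV) (ca2 (calG_local Hl)))
       \<and> (nilpotent_on UNIV (ca2 Hl) \<longrightarrow>
            strongly_conjugate (alphA k \<times> UNIV) (ca2 (calF_local Hl q)) (ca2 (calG_local Hl))
            \<and> ca_entropy (alphA k \<times> UNIV) (ca2 (calF_local Hl q)) = 0
            \<and> ca_entropy (alphA k \<times> UNIV) (ca2 (calG_local Hl)) = 0)"
proof (intro conjI impI)
  note sp = assms(1)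
  assume nn: "\<not> nilpotent_on UNIV (ca2 Hl)"
  obtain b where b: "\<forall>n j. (ca2 Hl ^^ n) b j \<noteq> q" using nonnil_orbit[OF sp nn] by blast
  have F: "ereal (real k) \<le> ca_entropy (alphA k \<times> UNIV) (ca2 (calF_local Hl q))"
  proof (rule ent_ge[where w=1])
    show "\<forall>t>0. real k \<le> log 2 (real (card (st_patterns (alphA k \<times> UNIV) (ca2 (calF_local Hl q)) 1 t))) / real t"
      by (intro allI impI lowerF[OF b]) simp_all
  qed
  have G: "ca_entropy (alphA k \<times> UNIV) (ca2 (calG_local Hl)) \<le> ereal (log 2 (real CARD('b)))"
    by (rule upperG)
  have "ereal (log 2 (real CARD('b))) < ereal (real k)" using assms(2) by simp
  then show "ca_entropy (alphA k \<times> UNIV) (ca2 (calF_local Hl q)) > ca_entropy (alphA k \<times> UNIV) (ca2 (calG_local Hl))"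
    using F G by (meson order_le_less_trans order_less_le_trans)
next
  note sp = assms(1)
  assume nl: "nilpotent_on UNIV (ca2 Hl)"
  obtain N where N: "\<forall>n\<ge>N. \<forall>c. (ca2 Hl ^^ n) c = (\<lambda>_. q)" using nil_uniform[OF sp nl] by blast
  have HN: "\<And>c. (ca2 Hl ^^ N) c = (\<lambda>_. q)" using N by simp
  show "strongly_conjugate (alphA k \<times> UNIV) (ca2 (calF_local Hl q)) (ca2 (calG_local Hl))"
    by (rule conj_nil[OF sp N])
  show "ca_entropy (alphA k \<times> UNIV) (ca2 (calF_local Hl q)) = 0"
  proof (rule freeze_zero)
    show "finite (alphA k \<times> (UNIV::'b set))" using finite_alphA by simp
    show "alphA k \<times> (UNIV::'b set) \<noteq> {}" using alphA_ne by blast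
    fix c m show "(ca2 (calF_local Hl q) ^^ (N + m)) c = (ca2 (calF_local Hl q) ^^ N) c"
      by (rule freeze_from_fix[OF calF_fix[OF sp HN]])
  qed
  show "ca_entropy (alphA k \<times> UNIV) (ca2 (calG_local Hl)) = 0"
  proof (rule freeze_zero)
    show "finite (alphA k \<times> (UNIV::'b set))" using finite_alphA by simp
    show "alphA k \<times> (UNIV::'b set) \<noteq> {}" using alphA_ne by blast
    fix c m show "(ca2 (calG_local Hl) ^^ (N + m)) c = (ca2 (calG_local Hl) ^^ N) c"
      by (rule freeze_from_fix[OF calG_fix[OF sp HN]])
  qed
qed


end
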